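(* If $\zeta'\le\zeta''$ (coordinatewise) are two configurations in $\{0,1\}^H$, then $\Delta^{\zeta''}\subset\Delta^{\zeta'}$. In particular, if for some $L>0$ and $\delta>0$ the configuration $\zeta'$ is $(L,\delta)$-good on $H$, then $\zeta''$ is also $(L,\delta)$-good on $H$.
   Context: Fix $\lambda>0$, $d\ge2$, $H=\{0,1\}^d\subset\mathbb{Z}^d$; for $x\in H$ let $\mathcal{N}_{H,x}$ be the set of nearest neighbours of $x$ lying in $H$. Each site carries independent Poisson processes of rate $1$ (down marks) and rate $\lambda$ (up marks), independent over sites; $\mathbb{P}$ is the underlying probability, and all processes below are built from the same marks. For $\zeta\in\{0,1\}^H$, the threshold $2$ contact process $(\eta^\zeta_{H;t})_{t\ge0}$ starts from $\zeta$; at a down mark at $x$ the spin becomes $0$; at an up mark at $x$ at time $t$ the spin becomes $1$ if at least $2$ sites of $\mathcal{N}_{H,x}$ are in state $1$ just before $t$. The independent flip process $(\pi^\zeta_{H;t})$ starts from $\zeta$ and sets the spin at $x$ to $0$ at each down mark and to $1$ at each up mark. $\Delta^\zeta=\bigcup_{t\in[0,d^2]}\{x\in H:\eta^\zeta_{H;t}(x)\ne\pi^\zeta_{H;t}(x)\}$. A set $S$ is $L$-thin in $H$ if $|S\cap\mathcal{N}_{H,x}|\le L$ for all $x\in H$; $\zeta$ is $(L,\delta)$-good on $H$ if $\mathbb{P}(\Delta^\zeta\text{ is }L\text{-thin in }H)\ge1-\delta$. *)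

theory Defs
  imports "HOL-Probability.Probability"
begin

type_synonym site = "nat \<Rightarrow> int"
type_synonym config = "site \<Rightarrow> bool"   (* True = spin 1, False = spin 0 *)

text \<open>The hypercube H = {0,1}^d inside Z^d; a point of Z^d is a function nat => int
  vanishing at coordinates >= d.\<close>
definition cube :: "nat \<Rightarrow> site set" where
  "cube d = {x. (\<forall>i<d. x i = 0 \<or> x i = 1) \<and> (\<forall>i\<ge>d. x i = 0)}"

definition nbrs :: "nat \<Rightarrow> site \<Rightarrow> site set" where
  "nbrs d x = {y \<in> cube d. (\<Sum>i<d. \<bar>x i - y i\<bar>) = 1}"

text \<open>Marks: dn x / up x are the sets of times of down / up marks at site x.
  All mark times in (0,t] at sites of H, in increasing order (empty list if infinitely many).\<close>
definition mark_times :: "nat \<Rightarrow> (site \<Rightarrow> real set) \<Rightarrow> (site \<Rightarrow> real set) \<Rightarrow> real \<Rightarrow> real list" where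
  "mark_times d dn up t = sorted_list_of_set {s. 0 \<le> s \<and> s \<le> t \<and> (\<exists>x\<in>cube d. s \<in> dn x \<or> s \<in> up x)}"

definition tc_step :: "nat \<Rightarrow> (site \<Rightarrow> real set) \<Rightarrow> (site \<Rightarrow> real set) \<Rightarrow> real \<Rightarrow> config \<Rightarrow> config" where
  "tc_step d dn up s \<sigma> = (\<lambda>x. if x \<in> cube d \<and> s \<in> dn x then False
      else if x \<in> cube d \<and> s \<in> up x \<and> card {y \<in> nbrs d x. \<sigma> y} \<ge> 2 then True
      else \<sigma> x)"

definition if_step :: "nat \<Rightarrow> (site \<Rightarrow> real set) \<Rightarrow> (site \<Rightarrow> real set) \<Rightarrow> real \<Rightarrow> config \<Rightarrow> config" where
  "if_step d dn up s \<sigma> = (\<lambda>x. if x \<in> cube d \<and> s \<in> dn x then False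
      else if x \<in> cube d \<and> s \<in> up x then True
      else \<sigma> x)"

text \<open>State at time t (right-continuous: marks at times <= t have been applied).\<close>
definition tc_proc :: "nat \<Rightarrow> (site \<Rightarrow> real set) \<Rightarrow> (site \<Rightarrow> real set) \<Rightarrow> config \<Rightarrow> real \<Rightarrow> config" where
  "tc_proc d dn up \<zeta> t = fold (tc_step d dn up) (mark_times d dn up t) \<zeta>"

definition if_proc :: "nat \<Rightarrow> (site \<Rightarrow> real set) \<Rightarrow> (site \<Rightarrow> real set) \<Rightarrow> config \<Rightarrow> real \<Rightarrow> config" where
  "if_proc d dn up \<zeta> t = fold (if_step d dn up) (mark_times d dn up t) \<zeta>"

definition Delta :: "nat \<Rightarrow> (site \<Rightarrow> real set) \<Rightarrow> (site \<Rightarrow> real set) \<Rightarrow> config \<Rightarrow> site set" where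
  "Delta d dn up \<zeta> = (\<Union>t\<in>{0..real (d^2)}. {x \<in> cube d. tc_proc d dn up \<zeta> t x \<noteq> if_proc d dn up \<zeta> t x})"

definition thin :: "nat \<Rightarrow> real \<Rightarrow> site set \<Rightarrow> bool" where
  "thin d L S \<longleftrightarrow> (\<forall>x\<in>cube d. real (card (S \<inter> nbrs d x)) \<le> L)"

text \<open>An independent family (indexed by I) of homogeneous Poisson point processes on (0,oo)
  with rates r i, on the probability space M: N i w is the (locally finite) set of points.\<close>
definition poisson_family :: "'w measure \<Rightarrow> 'i set \<Rightarrow> ('i \<Rightarrow> real) \<Rightarrow> ('i \<Rightarrow> 'w \<Rightarrow> real set) \<Rightarrow> bool" where
  "poisson_family M I r N \<longleftrightarrow> prob_space M \<and> (\<forall>i\<in>I. r i > 0) \<and>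
     (\<forall>i\<in>I. \<forall>w\<in>space M. N i w \<subseteq> {0<..} \<and> (\<forall>b. finite (N i w \<inter> {..b}))) \<and>
     (\<forall>i\<in>I. \<forall>a b. 0 \<le> a \<longrightarrow> a < b \<longrightarrow>
        (\<lambda>w. card (N i w \<inter> {a<..b})) \<in> measurable M (count_space UNIV) \<and>
        distr M (count_space UNIV) (\<lambda>w. card (N i w \<inter> {a<..b})) = measure_pmf (poisson_pmf (r i * (b - a)))) \<and>
     (\<forall>J. J \<subseteq> {(i, a, b). i \<in> I \<and> 0 \<le> a \<and> a < b} \<longrightarrow>
        (\<forall>i a b a' b'. (i, a, b) \<in> J \<longrightarrow> (i, a', b') \<in> J \<longrightarrow> (a, b) \<noteq> (a', b') \<longrightarrow>
            {a<..b} \<inter> {a'<..b'} = {}) \<longrightarrow>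
        prob_space.indep_vars M (\<lambda>_. count_space UNIV) (\<lambda>(i, a, b) w. card (N i w \<inter> {a<..b})) J)"

text \<open>The mark model: N (x, False) = down marks (rate 1), N (x, True) = up marks (rate lam),
  for x in H, all independent.\<close>
definition mark_model :: "nat \<Rightarrow> real \<Rightarrow> 'w measure \<Rightarrow> (site \<times> bool \<Rightarrow> 'w \<Rightarrow> real set) \<Rightarrow> bool" where
  "mark_model d lam M N \<longleftrightarrow>
     poisson_family M (cube d \<times> UNIV) (\<lambda>(x, b). if b then lam else 1) N"

definition good :: "nat \<Rightarrow> 'w measure \<Rightarrow> (site \<times> bool \<Rightarrow> 'w \<Rightarrow> real set) \<Rightarrow> real \<Rightarrow> real \<Rightarrow> config \<Rightarrow> bool" where
  "good d M N L \<delta> \<zeta> \<longleftrightarrow>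
     measure M {w \<in> space M. thin d L (Delta d (\<lambda>x. N (x, False) w) (\<lambda>x. N (x, True) w) \<zeta>)} \<ge> 1 - \<delta>"

end

theory Submission imports Defs begin

lemma cube_finite: "finite (cube d)"
proof -
  have "cube d \<subseteq> (\<lambda>f i. if i < d then f i else 0) ` (PiE {..<d} (\<lambda>_. {0,1::int}))"
  proof
    fix x assume x: "x \<in> cube d"
    let ?f = "restrict x {..<d}"
    have "?f \<in> PiE {..<d} (\<lambda>_. {0,1::int})" using x by (auto simp: cube_def)
    moreover have "x = (\<lambda>i. if i < d then ?f i else 0)" using x by (auto simp: cube_def)
    ultimately show "x \<in> (\<lambda>f i. if i < d then f i else 0) ` (PiE {..<d} (\<lambda>_. {0,1::int}))" by blast
  qed
  thus ?thesis by (rule finite_subset) (intro finite_imageI finite_PiE; simp)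
qed

lemma nbrs_finite: "finite (nbrs d x)"
  using cube_finite by (rule finite_subset[rotated]) (auto simp: nbrs_def)

definition inv4 :: "nat \<Rightarrow> config \<Rightarrow> config \<Rightarrow> config \<Rightarrow> config \<Rightarrow> bool" where
  "inv4 d s1 s2 p1 p2 \<longleftrightarrow> (\<forall>x\<in>cube d. (s1 x \<longrightarrow> s2 x) \<and> (s1 x \<longrightarrow> p1 x) \<and> (s2 x \<longrightarrow> p2 x)
      \<and> (p1 x = p2 x \<or> (s1 x = p1 x \<and> s2 x = p2 x)))"

lemma inv4_step:
  assumes "inv4 d s1 s2 p1 p2"
  shows "inv4 d (tc_step d dn up s s1) (tc_step d dn up s s2) (if_step d dn up s p1) (if_step d dn up s p2)"
proof -
  have c: "card {y \<in> nbrs d x. s1 y} \<le> card {y \<in> nbrs d x. s2 y}" for x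
  proof (rule card_mono)
    show "finite {y \<in> nbrs d x. s2 y}" using nbrs_finite[of d x] by simp
    show "{y \<in> nbrs d x. s1 y} \<subseteq> {y \<in> nbrs d x. s2 y}" using assms by (auto simp: inv4_def nbrs_def)
  qed
  show ?thesis using assms c unfolding inv4_def tc_step_def if_step_def
    by (smt (verit, best) le_trans)
qed

lemma inv4_fold:
  "inv4 d s1 s2 p1 p2 \<Longrightarrow> inv4 d (fold (tc_step d dn up) ws s1) (fold (tc_step d dn up) ws s2)
     (fold (if_step d dn up) ws p1) (fold (if_step d dn up) ws p2)"
  by (induction ws arbitrary: s1 s2 p1 p2) (simp_all add: inv4_step)

lemma Delta_mono:
  assumes le: "\<forall>x\<in>cube d. z1 x \<longrightarrow> z2 x"
  shows "Delta d dn up z2 \<subseteq> Delta d dn up z1"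
proof
  fix x assume "x \<in> Delta d dn up z2"
  then obtain t where t: "t \<in> {0..real (d^2)}" "x \<in> cube d"
    "tc_proc d dn up z2 t x \<noteq> if_proc d dn up z2 t x" unfolding Delta_def by blast
  have "inv4 d z1 z2 z1 z2" using le by (auto simp: inv4_def)
  hence "inv4 d (tc_proc d dn up z1 t) (tc_proc d dn up z2 t) (if_proc d dn up z1 t) (if_proc d dn up z2 t)"
    unfolding tc_proc_def if_proc_def by (rule inv4_fold)
  hence "tc_proc d dn up z1 t x \<noteq> if_proc d dn up z1 t x" using t unfolding inv4_def by blast
  thus "x \<in> Delta d dn up z1" using t by (auto simp: Delta_def)
qed


lemma sorted_insert_last:
  fixes A :: "real set"
  assumes "finite A" "\<forall>y\<in>A. y < s"
  shows "sorted_list_of_set (insert s A) = sorted_list_of_set A @ [s]"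
proof -
  have "sorted_wrt (<) (sorted_list_of_set A @ [s]) \<and> set (sorted_list_of_set A @ [s]) = insert s A
      \<and> length (sorted_list_of_set A @ [s]) = card (insert s A)"
    using assms by (auto simp: sorted_wrt_append card_insert_if)
  thus ?thesis using assms sorted_list_of_set_unique[of "insert s A" "sorted_list_of_set A @ [s]"]
    by simp
qed

definition gtc :: "nat \<Rightarrow> site set \<times> site set \<Rightarrow> config \<Rightarrow> config" where
  "gtc d l \<sigma> = (\<lambda>x. if x \<in> cube d \<and> x \<in> fst l then False
      else if x \<in> cube d \<and> x \<in> snd l \<and> card {y \<in> nbrs d x. \<sigma> y} \<ge> 2 then True else \<sigma> x)"

definition gif :: "nat \<Rightarrow> site set \<times> site set \<Rightarrow> config \<Rightarrow> config" where
  "gif d l \<sigma> = (\<lambda>x. if x \<in> cube d \<and> x \<in> fst l then False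
      else if x \<in> cube d \<and> x \<in> snd l then True else \<sigma> x)"

definition labt :: "nat \<Rightarrow> (site \<Rightarrow> real set) \<Rightarrow> (site \<Rightarrow> real set) \<Rightarrow> real \<Rightarrow> site set \<times> site set" where
  "labt d dn up s = ({x \<in> cube d. s \<in> dn x}, {x \<in> cube d. s \<in> up x})"

definition labI :: "nat \<Rightarrow> (site \<Rightarrow> real set) \<Rightarrow> (site \<Rightarrow> real set) \<Rightarrow> real \<Rightarrow> real \<Rightarrow> site set \<times> site set" where
  "labI d dn up a b = ({x \<in> cube d. dn x \<inter> {a<..b} \<noteq> {}}, {x \<in> cube d. up x \<inter> {a<..b} \<noteq> {}})"

definition labs :: "nat \<Rightarrow> (site \<Rightarrow> real set) \<Rightarrow> (site \<Rightarrow> real set) \<Rightarrow> nat \<Rightarrow> (site set \<times> site set) list" where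
  "labs d dn up n = map (\<lambda>k. labI d dn up (real k / 2^n) (real (Suc k) / 2^n)) [0..<d^2*2^n]"

definition DL :: "nat \<Rightarrow> config \<Rightarrow> (site set \<times> site set) list \<Rightarrow> site set" where
  "DL d \<zeta> ls = (\<Union>k\<in>{..length ls}. {x \<in> cube d. fold (gtc d) (take k ls) \<zeta> x \<noteq> fold (gif d) (take k ls) \<zeta> x})"

definition MS :: "nat \<Rightarrow> (site \<Rightarrow> real set) \<Rightarrow> (site \<Rightarrow> real set) \<Rightarrow> real \<Rightarrow> real set" where
  "MS d dn up t = {s. 0 \<le> s \<and> s \<le> t \<and> (\<exists>x\<in>cube d. s \<in> dn x \<or> s \<in> up x)}"

lemma no_marks:
  assumes "MS d dn up b \<inter> {a<..b} = {}" "0 \<le> a" "x \<in> cube d"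
  shows "dn x \<inter> {a<..b} = {} \<and> up x \<inter> {a<..b} = {}"
proof -
  have "y \<notin> dn x \<union> up x" if "a < y" "y \<le> b" for y
  proof
    assume y: "y \<in> dn x \<union> up x"
    have "y \<in> MS d dn up b \<inter> {a<..b}" using y that assms(2,3) unfolding MS_def by auto
    thus False using assms(1) by simp
  qed
  thus ?thesis by auto
qed

lemma no_marks_lab: "MS d dn up b \<inter> {a<..b} = {} \<Longrightarrow> 0 \<le> a \<Longrightarrow> labI d dn up a b = ({},{})"
proof -
  assume T0: "MS d dn up b \<inter> {a<..b} = {}" and a0: "0 \<le> a"
  have "dn x \<inter> {a<..b} = {} \<and> up x \<inter> {a<..b} = {}" if x: "x \<in> cube d" for x
    by (rule no_marks[where d=d and dn=dn and up=up and b=b and a=a and x=x, OF T0 a0 x])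
  thus ?thesis by (auto simp: labI_def)
qed

lemma tc_step_eq: "tc_step d dn up = (\<lambda>s. gtc d (labt d dn up s))"
  by (auto simp: fun_eq_iff tc_step_def gtc_def labt_def)

lemma if_step_eq: "if_step d dn up = (\<lambda>s. gif d (labt d dn up s))"
  by (auto simp: fun_eq_iff if_step_def gif_def labt_def)

lemma gtc_empty: "gtc d ({},{}) = id" by (auto simp: fun_eq_iff gtc_def)
lemma gif_empty: "gif d ({},{}) = id" by (auto simp: fun_eq_iff gif_def)

lemma fold_grid:
  fixes G :: "site set \<times> site set \<Rightarrow> config \<Rightarrow> config"
  assumes fin: "finite (MS d dn up (real (d^2)))"
    and sep: "\<forall>s\<in>MS d dn up (real (d^2)). \<forall>s'\<in>MS d dn up (real (d^2)). s \<noteq> s' \<longrightarrow> \<bar>s - s'\<bar> \<ge> 1/2^n"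
    and G0: "G ({},{}) = id"
    and pos: "\<forall>x\<in>cube d. \<forall>s. s \<in> dn x \<or> s \<in> up x \<longrightarrow> s > 0"
  shows "k \<le> d^2*2^n \<Longrightarrow> fold G (map (\<lambda>k. labI d dn up (real k / 2^n) (real (Suc k) / 2^n)) [0..<k]) \<zeta>
     = fold (\<lambda>s. G (labt d dn up s)) (mark_times d dn up (real k / 2^n)) \<zeta>"
proof (induction k)
  case 0
  have e: "{s. 0 \<le> s \<and> s \<le> real 0 / 2^n \<and> (\<exists>x\<in>cube d. s \<in> dn x \<or> s \<in> up x)} = {}"
    using pos by force
  show ?case unfolding mark_times_def e by simp
next
  case (Suc k)
  define a where "a = real k / 2^n"
  define b where "b = real (Suc k) / 2^n"
  have a0: "0 \<le> a" by (simp add: a_def)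
  have ba: "b - a = 1/2^n" by (simp add: a_def b_def field_simps)
  have bT: "b \<le> real (d^2)"
  proof -
    have "real (Suc k) \<le> real (d^2 * 2^n)" using Suc.prems by (simp only: of_nat_le_iff)
    hence "real (Suc k) \<le> real (d^2) * 2^n" by simp
    thus ?thesis by (simp add: b_def divide_le_eq)
  qed
  have MSsub: "MS d dn up b \<subseteq> MS d dn up (real (d^2))" using bT by (auto simp: MS_def)
  have finb: "finite (MS d dn up b)" using fin MSsub finite_subset by blast
  have "(1::real)/2^n > 0" by simp
  hence "a \<le> b" using ba by linarith
  have fina: "finite (MS d dn up a)" using finb by (rule finite_subset[rotated]) (use \<open>a \<le> b\<close> in \<open>auto simp: MS_def\<close>)
  have split: "MS d dn up b = MS d dn up a \<union> (MS d dn up b \<inter> {a<..b})"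
    using \<open>a \<le> b\<close> by (auto simp: MS_def)
  have IH: "fold G (map (\<lambda>k. labI d dn up (real k / 2^n) (real (Suc k) / 2^n)) [0..<k]) \<zeta>
     = fold (\<lambda>s. G (labt d dn up s)) (mark_times d dn up a) \<zeta>"
    using Suc by (simp add: a_def)
  have mt: "mark_times d dn up t = sorted_list_of_set (MS d dn up t)" for t
    by (simp add: mark_times_def MS_def)
  have lhs: "fold G (map (\<lambda>k. labI d dn up (real k / 2^n) (real (Suc k) / 2^n)) [0..<Suc k]) \<zeta>
     = G (labI d dn up a b) (fold (\<lambda>s. G (labt d dn up s)) (mark_times d dn up a) \<zeta>)"
    using IH by (simp add: a_def b_def)
  show ?case
  proof (cases "MS d dn up b \<inter> {a<..b} = {}")
    case True
    note T0 = True
    hence eq: "MS d dn up b = MS d dn up a" using split by blast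
    have "labI d dn up a b = ({},{})" using T0 a0 by (rule no_marks_lab)
    hence "fold (\<lambda>s. G (labt d dn up s)) (mark_times d dn up b) \<zeta>
       = G (labI d dn up a b) (fold (\<lambda>s. G (labt d dn up s)) (mark_times d dn up a) \<zeta>)"
      unfolding mt eq using G0 by simp
    thus ?thesis unfolding b_def[symmetric] using lhs by simp
  next
    case False
    then obtain s where s: "s \<in> MS d dn up b" "a < s" "s \<le> b" by auto
    have sT: "s \<in> MS d dn up (real (d^2))" using s MSsub by blast
    have sub: "MS d dn up b \<inter> {a<..b} \<subseteq> {s}"
    proof
      fix y assume y: "y \<in> MS d dn up b \<inter> {a<..b}"
      hence yb: "y \<in> MS d dn up b" "a < y" "y \<le> b" by auto
      have yT: "y \<in> MS d dn up (real (d^2))" using yb MSsub by blast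
      have lt1: "\<bar>s - y\<bar> < 1/2^n" using s yb ba by linarith
      show "y \<in> {s}"
      proof (rule ccontr)
        assume "y \<notin> {s}"
        hence ne: "s \<noteq> y" by simp
        have "1/2^n \<le> \<bar>s - y\<bar>" using sep[rule_format, OF sT yT ne] .
        thus False using lt1 by linarith
      qed
    qed
    have sin: "s \<in> MS d dn up b \<inter> {a<..b}" using s by simp
    have one: "MS d dn up b \<inter> {a<..b} = {s}" using sub sin by blast
    have eq: "MS d dn up b = insert s (MS d dn up a)"
    proof -
      have "MS d dn up b = MS d dn up a \<union> {s}" using split unfolding one .
      thus ?thesis by simp
    qed
    have lt: "\<forall>y\<in>MS d dn up a. y < s" using s by (auto simp: MS_def)
    have lab: "labI d dn up a b = labt d dn up s"
    proof -
      have "(dn x \<inter> {a<..b} \<noteq> {} \<longleftrightarrow> s \<in> dn x) \<and> (up x \<inter> {a<..b} \<noteq> {} \<longleftrightarrow> s \<in> up x)" if "x \<in> cube d" for x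
      proof -
        have "y = s" if "y \<in> dn x \<union> up x" "a < y" "y \<le> b" for y
        proof -
          have "y \<in> MS d dn up b \<inter> {a<..b}" using that \<open>x \<in> cube d\<close> a0 unfolding MS_def by auto
          thus "y = s" unfolding one by simp
        qed
        hence "(\<exists>y\<in>dn x. a < y \<and> y \<le> b) \<longleftrightarrow> s \<in> dn x" "(\<exists>y\<in>up x. a < y \<and> y \<le> b) \<longleftrightarrow> s \<in> up x"
          using s by auto
        thus ?thesis by (simp add: disjoint_iff Bex_def)
      qed
      thus ?thesis by (auto simp: labI_def labt_def)
    qed
    have "fold (\<lambda>s. G (labt d dn up s)) (mark_times d dn up b) \<zeta>
       = G (labI d dn up a b) (fold (\<lambda>s. G (labt d dn up s)) (mark_times d dn up a) \<zeta>)"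
      unfolding mt eq sorted_insert_last[OF fina lt] lab by simp
    thus ?thesis unfolding b_def[symmetric] using lhs by simp
  qed
qed


lemma MS_grid:
  assumes sep: "\<forall>s\<in>MS d dn up (real (d^2)). \<forall>s'\<in>MS d dn up (real (d^2)). s \<noteq> s' \<longrightarrow> \<bar>s - s'\<bar> \<ge> 1/2^n"
    and t: "0 \<le> t" "t \<le> real (d^2)"
  shows "\<exists>k\<le>d^2*2^n. MS d dn up t = MS d dn up (real k / 2^n)"
proof (cases "t = 0")
  case True thus ?thesis by (intro exI[of _ 0]) auto
next
  case False
  hence tpos: "t > 0" using t by simp
  define k where "k = nat \<lceil>t * 2^n\<rceil>"
  have xpos: "t * 2^n > 0" using tpos by simp
  hence "\<lceil>t * 2^n\<rceil> \<ge> 0" by linarith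
  hence kr: "real k = of_int \<lceil>t * 2^n\<rceil>" unfolding k_def by simp
  have kge: "real k \<ge> t * 2^n" unfolding kr by (rule le_of_int_ceiling)
  have klt: "real k - 1 < t * 2^n" using ceiling_correct[of "t * 2^n"] unfolding kr by linarith
  have kle: "k \<le> d^2*2^n"
  proof -
    have "t * 2^n \<le> real (d^2) * 2^n" using t by (intro mult_right_mono) auto
    hence "t * 2^n \<le> of_int (int (d^2 * 2^n))" by simp
    hence "\<lceil>t * 2^n\<rceil> \<le> int (d^2*2^n)" by (rule ceiling_le)
    thus ?thesis unfolding k_def by (simp only: nat_le_iff)
  qed
  define b where "b = real k / 2^n"
  define a where "a = (real k - 1) / 2^n"
  have tb: "t \<le> b" using kge by (simp add: b_def pos_le_divide_eq)
  have at: "a < t" using klt by (simp add: a_def pos_divide_less_eq)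
  have ba: "b - a = 1/2^n" by (simp add: a_def b_def diff_divide_distrib)
  have bT: "b \<le> real (d^2)"
  proof -
    have "real k \<le> real (d^2 * 2^n)" using kle by (simp only: of_nat_le_iff)
    hence "real k \<le> real (d^2) * 2^n" by simp
    thus ?thesis by (simp add: b_def divide_le_eq)
  qed
  show ?thesis
  proof (cases "\<exists>s\<in>MS d dn up t. s > a")
    case True
    then obtain s where s: "s \<in> MS d dn up t" "s > a" by blast
    have "MS d dn up b = MS d dn up t"
    proof
      show "MS d dn up t \<subseteq> MS d dn up b" using tb by (auto simp: MS_def)
      show "MS d dn up b \<subseteq> MS d dn up t"
      proof
        fix s' assume s': "s' \<in> MS d dn up b"
        show "s' \<in> MS d dn up t"
        proof (rule ccontr)
          assume "s' \<notin> MS d dn up t"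
          hence "s' > t" using s' by (auto simp: MS_def)
          moreover have "s \<le> t" using s by (auto simp: MS_def)
          moreover have "s \<in> MS d dn up (real (d^2))" "s' \<in> MS d dn up (real (d^2))"
            using s s' bT t by (auto simp: MS_def)
          moreover have "s' \<le> b" using s' by (auto simp: MS_def)
          ultimately have "s \<noteq> s'" "\<bar>s - s'\<bar> < 1/2^n" using s ba by auto
          moreover have "\<bar>s - s'\<bar> \<ge> 1/2^n" using sep \<open>s \<in> MS d dn up (real (d^2))\<close>
             \<open>s' \<in> MS d dn up (real (d^2))\<close> \<open>s \<noteq> s'\<close> by blast
          ultimately show False by linarith
        qed
      qed
    qed
    thus ?thesis using kle by (auto simp: b_def)
  next
    case False
    have "t * 2^n > 0" using tpos by simp
    hence "real k > 0" using kge by linarith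
    hence k1: "k \<ge> 1" by simp
    have "MS d dn up t = MS d dn up a" using False at by (auto simp: MS_def)
    moreover have "a = real (k - 1) / 2^n" using k1 by (simp add: a_def of_nat_diff)
    ultimately show ?thesis using kle by (intro exI[of _ "k-1"]) auto
  qed
qed

lemma Delta_grid:
  assumes fin: "finite (MS d dn up (real (d^2)))"
    and sep: "\<forall>s\<in>MS d dn up (real (d^2)). \<forall>s'\<in>MS d dn up (real (d^2)). s \<noteq> s' \<longrightarrow> \<bar>s - s'\<bar> \<ge> 1/2^n"
    and pos: "\<forall>x\<in>cube d. \<forall>s. s \<in> dn x \<or> s \<in> up x \<longrightarrow> s > 0"
  shows "Delta d dn up \<zeta> = DL d \<zeta> (labs d dn up n)"
proof -
  let ?K = "d^2*2^n"
  define disc where "disc t = {x \<in> cube d. tc_proc d dn up \<zeta> t x \<noteq> if_proc d dn up \<zeta> t x}" for t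
  have mt: "mark_times d dn up t = sorted_list_of_set (MS d dn up t)" for t
    by (simp add: mark_times_def MS_def)
  have discMS: "MS d dn up t = MS d dn up t' \<Longrightarrow> disc t = disc t'" for t t'
    by (simp add: disc_def tc_proc_def if_proc_def mt)
  have tk: "take k (labs d dn up n) = map (\<lambda>k. labI d dn up (real k / 2^n) (real (Suc k) / 2^n)) [0..<k]"
    if "k \<le> ?K" for k using that by (simp add: labs_def take_map)
  have DLeq: "DL d \<zeta> (labs d dn up n) = (\<Union>k\<in>{..?K}. disc (real k / 2^n))"
  proof -
    have "{x \<in> cube d. fold (gtc d) (take k (labs d dn up n)) \<zeta> x \<noteq> fold (gif d) (take k (labs d dn up n)) \<zeta> x}
       = disc (real k / 2^n)" if "k \<le> ?K" for k
    proof -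
      have "fold (gtc d) (take k (labs d dn up n)) \<zeta> = tc_proc d dn up \<zeta> (real k / 2^n)"
        unfolding tk[OF that] tc_proc_def tc_step_eq
        by (rule fold_grid[where G="gtc d", OF fin sep gtc_empty[of d] pos that])
      moreover have "fold (gif d) (take k (labs d dn up n)) \<zeta> = if_proc d dn up \<zeta> (real k / 2^n)"
        unfolding tk[OF that] if_proc_def if_step_eq
        by (rule fold_grid[where G="gif d", OF fin sep gif_empty[of d] pos that])
      ultimately show ?thesis by (simp add: disc_def)
    qed
    thus ?thesis by (simp add: DL_def labs_def)
  qed
  have Deq: "Delta d dn up \<zeta> = (\<Union>t\<in>{0..real (d^2)}. disc t)" by (simp add: Delta_def disc_def)
  show ?thesis unfolding DLeq Deq
  proof
    show "(\<Union>t\<in>{0..real (d^2)}. disc t) \<subseteq> (\<Union>k\<in>{..?K}. disc (real k / 2^n))"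
    proof (rule UN_least)
      fix t assume "t \<in> {0..real (d^2)}"
      hence "0 \<le> t" "t \<le> real (d^2)" by auto
      then obtain k where "k \<le> ?K" "MS d dn up t = MS d dn up (real k / 2^n)"
        using MS_grid[OF sep] by blast
      thus "disc t \<subseteq> (\<Union>k\<in>{..?K}. disc (real k / 2^n))" using discMS by blast
    qed
    show "(\<Union>k\<in>{..?K}. disc (real k / 2^n)) \<subseteq> (\<Union>t\<in>{0..real (d^2)}. disc t)"
    proof (rule UN_least)
      fix k assume "k \<in> {..?K}"
      hence "real k \<le> real (d^2 * 2^n)" by (simp only: atMost_iff of_nat_le_iff)
      hence "real k \<le> real (d^2) * 2^n" by simp
      hence "real k / 2^n \<in> {0..real (d^2)}" by (simp add: divide_le_eq)
      thus "disc (real k / 2^n) \<subseteq> (\<Union>t\<in>{0..real (d^2)}. disc t)" by blast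
    qed
  qed
qed


lemma thin_anti: "S \<subseteq> S' \<Longrightarrow> thin d L S' \<Longrightarrow> thin d L S"
proof -
  assume sub: "S \<subseteq> S'" and th: "thin d L S'"
  show "thin d L S" unfolding thin_def
  proof
    fix x assume x: "x \<in> cube d"
    have "card (S \<inter> nbrs d x) \<le> card (S' \<inter> nbrs d x)"
      by (rule card_mono) (use nbrs_finite[of d x] sub in auto)
    thus "real (card (S \<inter> nbrs d x)) \<le> L" using th x unfolding thin_def by force
  qed
qed

lemma sep_eventually:
  fixes S :: "real set"
  assumes "finite S"
  shows "\<exists>n0. \<forall>n\<ge>n0. \<forall>s\<in>S. \<forall>s'\<in>S. s \<noteq> s' \<longrightarrow> \<bar>s - s'\<bar> \<ge> 1/2^n"
proof -
  define D where "D = (\<lambda>(s, s'). \<bar>s - s'\<bar>) ` {p \<in> S \<times> S. fst p \<noteq> snd p}"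
  have finD: "finite D" unfolding D_def using assms by auto
  show ?thesis
  proof (cases "D = {}")
    case True
    hence "\<forall>s\<in>S. \<forall>s'\<in>S. s = s'" unfolding D_def by auto
    thus ?thesis by blast
  next
    case False
    define m where "m = Min D"
    have mpos: "m > 0" unfolding m_def using finD False by (auto simp: D_def)
    have mle: "m \<le> \<bar>s - s'\<bar>" if "s \<in> S" "s' \<in> S" "s \<noteq> s'" for s s'
    proof -
      have "\<bar>s - s'\<bar> \<in> D" unfolding D_def using that by force
      thus ?thesis unfolding m_def using finD by simp
    qed
    obtain n0 where n0: "(1/2::real)^n0 < m" using real_arch_pow_inv[OF mpos, of "1/2"] by auto
    have "1/2^n \<le> \<bar>s - s'\<bar>" if "n \<ge> n0" "s \<in> S" "s' \<in> S" "s \<noteq> s'" for n s s'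
    proof -
      have "(1/2::real)^n \<le> (1/2)^n0" using that(1) by (intro power_decreasing) auto
      hence "1/2^n < m" using n0 by (simp add: power_one_over)
      thus ?thesis using mle[OF that(2-4)] by linarith
    qed
    thus ?thesis by blast
  qed
qed

lemma det_grid:
  assumes fin: "\<forall>x\<in>cube d. finite (dn x \<inter> {..real (d^2)}) \<and> finite (up x \<inter> {..real (d^2)})"
    and pos: "\<forall>x\<in>cube d. \<forall>s. s \<in> dn x \<or> s \<in> up x \<longrightarrow> s > 0"
  shows "\<exists>n0. \<forall>n\<ge>n0. Delta d dn up \<zeta> = DL d \<zeta> (labs d dn up n)"
proof -
  have "MS d dn up (real (d^2)) \<subseteq> (\<Union>x\<in>cube d. (dn x \<inter> {..real (d^2)}) \<union> (up x \<inter> {..real (d^2)}))"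
    by (auto simp: MS_def)
  moreover have "finite (\<Union>x\<in>cube d. (dn x \<inter> {..real (d^2)}) \<union> (up x \<inter> {..real (d^2)}))"
    using fin cube_finite by blast
  ultimately have finMS: "finite (MS d dn up (real (d^2)))" by (rule finite_subset)
  obtain n0 where n0: "\<forall>n\<ge>n0. \<forall>s\<in>MS d dn up (real (d^2)). \<forall>s'\<in>MS d dn up (real (d^2)). s \<noteq> s' \<longrightarrow> \<bar>s - s'\<bar> \<ge> 1/2^n"
    using sep_eventually[OF finMS] by blast
  show ?thesis
    by (rule exI[of _ n0], intro allI impI Delta_grid[OF finMS _ pos]) (use n0 in blast)
qed

lemma mm_facts:
  assumes "mark_model d lam M N"
  shows "prob_space M"
    and "\<And>x b w. x \<in> cube d \<Longrightarrow> w \<in> space M \<Longrightarrow> N (x,b) w \<subseteq> {0<..}"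
    and "\<And>x b w c. x \<in> cube d \<Longrightarrow> w \<in> space M \<Longrightarrow> finite (N (x,b) w \<inter> {..c})"
    and "\<And>x b a c. x \<in> cube d \<Longrightarrow> 0 \<le> a \<Longrightarrow> a < c \<Longrightarrow>
          (\<lambda>w. card (N (x,b) w \<inter> {a<..c})) \<in> measurable M (count_space UNIV)"
proof -
  have pf: "poisson_family M (cube d \<times> UNIV) (\<lambda>(x, b). if b then lam else 1) N"
    using assms by (simp add: mark_model_def)
  show "prob_space M" using pf by (simp add: poisson_family_def)
  show "N (x,b) w \<subseteq> {0<..}" if "x \<in> cube d" "w \<in> space M" for x b w
    using pf that unfolding poisson_family_def by blast
  show "finite (N (x,b) w \<inter> {..c})" if "x \<in> cube d" "w \<in> space M" for x b w c
    using pf that unfolding poisson_family_def by blast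
  show "(\<lambda>w. card (N (x,b) w \<inter> {a<..c})) \<in> measurable M (count_space UNIV)"
    if "x \<in> cube d" "0 \<le> a" "a < c" for x b a c
  proof -
    have "(x,b) \<in> cube d \<times> UNIV" using that by simp
    thus ?thesis using pf that unfolding poisson_family_def by blast
  qed
qed

lemma pred_nonempty:
  assumes mm: "mark_model d lam M N" and x: "x \<in> cube d" and ac: "0 \<le> a" "a < c"
  shows "Measurable.pred M (\<lambda>w. N (x,b) w \<inter> {a<..c} \<noteq> {})"
proof -
  have cm: "(\<lambda>w. card (N (x,b) w \<inter> {a<..c})) \<in> measurable M (count_space UNIV)"
    using mm_facts(4)[OF mm x ac] .
  have p: "Measurable.pred M (\<lambda>w. card (N (x,b) w \<inter> {a<..c}) \<noteq> 0)"
    by (rule measurable_compose[OF cm, where g="\<lambda>n::nat. n \<noteq> 0"]) simp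
  have eqw: "(card (N (x,b) w \<inter> {a<..c}) \<noteq> 0) = (N (x,b) w \<inter> {a<..c} \<noteq> {})" if w: "w \<in> space M" for w
  proof -
    have "finite (N (x,b) w \<inter> {..c})" using mm_facts(3)[OF mm x w] .
    hence "finite (N (x,b) w \<inter> {a<..c})" by (rule finite_subset[rotated]) auto
    thus ?thesis by simp
  qed
  have "(\<lambda>w. card (N (x,b) w \<inter> {a<..c}) \<noteq> 0) \<in> measurable M (count_space UNIV) \<longleftrightarrow>
        (\<lambda>w. N (x,b) w \<inter> {a<..c} \<noteq> {}) \<in> measurable M (count_space UNIV)"
    by (rule measurable_cong) (rule eqw)
  thus ?thesis using p by (rule iffD1)
qed

lemma pred_empty:
  assumes mm: "mark_model d lam M N" and x: "x \<in> cube d" and ac: "0 \<le> a" "a < c"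
  shows "Measurable.pred M (\<lambda>w. N (x,b) w \<inter> {a<..c} = {})"
proof -
  have "Measurable.pred M (\<lambda>w. \<not> (N (x,b) w \<inter> {a<..c} \<noteq> {}))"
    by (rule pred_intros_logic(2)) (rule pred_nonempty[OF mm x ac])
  thus ?thesis by simp
qed

definition Fs :: "nat \<Rightarrow> nat \<Rightarrow> (site set \<times> site set) list set" where
  "Fs d n = {ls. set ls \<subseteq> Pow (cube d) \<times> Pow (cube d) \<and> length ls = d^2*2^n}"

lemma Fs_finite: "finite (Fs d n)"
  unfolding Fs_def by (rule finite_lists_length_eq) (use cube_finite in simp)

lemma labs_Fs: "labs d dn up n \<in> Fs d n"
  by (auto simp: Fs_def labs_def labI_def)

lemma set_eq_sub: "D \<subseteq> C \<Longrightarrow> ({x \<in> C. P x} = D) = (\<forall>x\<in>C. P x = (x \<in> D))"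
  by auto

lemma labs_eq_iff:
  assumes ls: "ls \<in> Fs d n"
  shows "(labs d dn up n = ls) \<longleftrightarrow> (\<forall>k\<in>{..<d^2*2^n}.
      (\<forall>x\<in>cube d. (dn x \<inter> {real k / 2^n <.. real (Suc k) / 2^n} \<noteq> {}) = (x \<in> fst (ls!k))) \<and>
      (\<forall>x\<in>cube d. (up x \<inter> {real k / 2^n <.. real (Suc k) / 2^n} \<noteq> {}) = (x \<in> snd (ls!k))))"
proof -
  have len: "length ls = d^2*2^n" and st: "set ls \<subseteq> Pow (cube d) \<times> Pow (cube d)" using ls by (auto simp: Fs_def)
  have sub: "fst (ls!k) \<subseteq> cube d" "snd (ls!k) \<subseteq> cube d" if "k < d^2*2^n" for k
  proof -
    have "ls!k \<in> Pow (cube d) \<times> Pow (cube d)" using st nth_mem[of k ls] that len by auto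
    thus "fst (ls!k) \<subseteq> cube d" "snd (ls!k) \<subseteq> cube d" by (cases "ls!k", simp)+
  qed
  have "(labs d dn up n = ls) \<longleftrightarrow> (\<forall>k<d^2*2^n. labI d dn up (real k / 2^n) (real (Suc k) / 2^n) = ls!k)"
    unfolding labs_def list_eq_iff_nth_eq using len by auto
  also have "\<dots> \<longleftrightarrow> (\<forall>k\<in>{..<d^2*2^n}.
      (\<forall>x\<in>cube d. (dn x \<inter> {real k / 2^n <.. real (Suc k) / 2^n} \<noteq> {}) = (x \<in> fst (ls!k))) \<and>
      (\<forall>x\<in>cube d. (up x \<inter> {real k / 2^n <.. real (Suc k) / 2^n} \<noteq> {}) = (x \<in> snd (ls!k))))"
  proof -
    have "labI d dn up (real k / 2^n) (real (Suc k) / 2^n) = ls!k \<longleftrightarrow>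
      (\<forall>x\<in>cube d. (dn x \<inter> {real k / 2^n <.. real (Suc k) / 2^n} \<noteq> {}) = (x \<in> fst (ls!k))) \<and>
      (\<forall>x\<in>cube d. (up x \<inter> {real k / 2^n <.. real (Suc k) / 2^n} \<noteq> {}) = (x \<in> snd (ls!k)))"
      if "k < d^2*2^n" for k
      unfolding labI_def prod_eq_iff fst_conv snd_conv
      using set_eq_sub[OF sub(1)[OF that]] set_eq_sub[OF sub(2)[OF that]] by simp
    note E = this
    show ?thesis
    proof (intro iffI ballI allI impI)
      fix k assume A: "\<forall>k<d^2*2^n. labI d dn up (real k / 2^n) (real (Suc k) / 2^n) = ls!k"
        and k: "k \<in> {..<d^2*2^n}"
      hence k': "k < d^2*2^n" by simp
      show "(\<forall>x\<in>cube d. (dn x \<inter> {real k / 2^n <.. real (Suc k) / 2^n} \<noteq> {}) = (x \<in> fst (ls!k))) \<and>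
      (\<forall>x\<in>cube d. (up x \<inter> {real k / 2^n <.. real (Suc k) / 2^n} \<noteq> {}) = (x \<in> snd (ls!k)))"
        using E[OF k'] A k' by blast
    next
      fix k assume A: "\<forall>k\<in>{..<d^2*2^n}.
      (\<forall>x\<in>cube d. (dn x \<inter> {real k / 2^n <.. real (Suc k) / 2^n} \<noteq> {}) = (x \<in> fst (ls!k))) \<and>
      (\<forall>x\<in>cube d. (up x \<inter> {real k / 2^n <.. real (Suc k) / 2^n} \<noteq> {}) = (x \<in> snd (ls!k)))"
        and k': "k < d^2*2^n"
      have "k \<in> {..<d^2*2^n}" using k' by simp
      thus "labI d dn up (real k / 2^n) (real (Suc k) / 2^n) = ls!k"
        using E[OF k'] A by blast
    qed
  qed
  finally show ?thesis .
qed

lemma pred_labs_eq: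
  assumes mm: "mark_model d lam M N" and ls: "ls \<in> Fs d n"
  shows "Measurable.pred M (\<lambda>w. labs d (\<lambda>x. N (x,False) w) (\<lambda>x. N (x,True) w) n = ls)"
proof -
  have a: "0 \<le> real k / 2^n" "real k / 2^n < real (Suc k) / 2^n" for k
    by (auto simp: divide_strict_right_mono)
  show ?thesis
    unfolding labs_eq_iff[OF ls]
    by (intro pred_intros_finite(3) finite_lessThan cube_finite pred_intros_logic
        measurable_const) (rule pred_empty[OF mm _ a], assumption | simp)+
qed

lemma pred_thin_n:
  assumes mm: "mark_model d lam M N"
  shows "Measurable.pred M (\<lambda>w. thin d L (DL d \<zeta> (labs d (\<lambda>x. N (x,False) w) (\<lambda>x. N (x,True) w) n)))"
proof -
  have eq: "thin d L (DL d \<zeta> (labs d (\<lambda>x. N (x,False) w) (\<lambda>x. N (x,True) w) n)) \<longleftrightarrow>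
     (\<exists>ls\<in>Fs d n. thin d L (DL d \<zeta> ls) \<and> labs d (\<lambda>x. N (x,False) w) (\<lambda>x. N (x,True) w) n = ls)" for w
    using labs_Fs by auto
  show ?thesis unfolding eq
    by (rule pred_intros_finite(4)[OF Fs_finite], rule pred_intros_conj1', rule pred_labs_eq[OF mm], assumption)
qed

lemma E_meas:
  assumes mm: "mark_model d lam M N"
  shows "{w \<in> space M. thin d L (Delta d (\<lambda>x. N (x,False) w) (\<lambda>x. N (x,True) w) \<zeta>)} \<in> sets M"
proof -
  have eq: "thin d L (Delta d (\<lambda>x. N (x,False) w) (\<lambda>x. N (x,True) w) \<zeta>) \<longleftrightarrow>
    (\<exists>n0::nat. \<forall>n. n0 \<le> n \<longrightarrow> thin d L (DL d \<zeta> (labs d (\<lambda>x. N (x,False) w) (\<lambda>x. N (x,True) w) n)))"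
    if w: "w \<in> space M" for w
  proof -
    have "\<exists>n0. \<forall>n\<ge>n0. Delta d (\<lambda>x. N (x,False) w) (\<lambda>x. N (x,True) w) \<zeta>
        = DL d \<zeta> (labs d (\<lambda>x. N (x,False) w) (\<lambda>x. N (x,True) w) n)"
    proof (rule det_grid)
      show "\<forall>x\<in>cube d. finite (N (x,False) w \<inter> {..real (d^2)}) \<and> finite (N (x,True) w \<inter> {..real (d^2)})"
        using mm_facts(3)[OF mm _ w] by blast
      show "\<forall>x\<in>cube d. \<forall>s. s \<in> N (x,False) w \<or> s \<in> N (x,True) w \<longrightarrow> s > 0"
        using mm_facts(2)[OF mm _ w] by fastforce
    qed
    then obtain n1 where n1: "\<forall>n\<ge>n1. Delta d (\<lambda>x. N (x,False) w) (\<lambda>x. N (x,True) w) \<zeta>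
        = DL d \<zeta> (labs d (\<lambda>x. N (x,False) w) (\<lambda>x. N (x,True) w) n)" by blast
    show ?thesis
    proof
      assume "thin d L (Delta d (\<lambda>x. N (x,False) w) (\<lambda>x. N (x,True) w) \<zeta>)"
      thus "\<exists>n0::nat. \<forall>n. n0 \<le> n \<longrightarrow> thin d L (DL d \<zeta> (labs d (\<lambda>x. N (x,False) w) (\<lambda>x. N (x,True) w) n))"
      proof (intro exI[of _ n1] allI impI)
        fix n assume "n1 \<le> n"
        hence "Delta d (\<lambda>x. N (x,False) w) (\<lambda>x. N (x,True) w) \<zeta>
           = DL d \<zeta> (labs d (\<lambda>x. N (x,False) w) (\<lambda>x. N (x,True) w) n)" using n1 by blast
        thus "thin d L (DL d \<zeta> (labs d (\<lambda>x. N (x,False) w) (\<lambda>x. N (x,True) w) n))"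
          using \<open>thin d L (Delta d (\<lambda>x. N (x,False) w) (\<lambda>x. N (x,True) w) \<zeta>)\<close> by simp
      qed
    next
      assume "\<exists>n0::nat. \<forall>n. n0 \<le> n \<longrightarrow> thin d L (DL d \<zeta> (labs d (\<lambda>x. N (x,False) w) (\<lambda>x. N (x,True) w) n))"
      then obtain n0 where n0: "\<forall>n. n0 \<le> n \<longrightarrow> thin d L (DL d \<zeta> (labs d (\<lambda>x. N (x,False) w) (\<lambda>x. N (x,True) w) n))"
        by blast
      have "thin d L (DL d \<zeta> (labs d (\<lambda>x. N (x,False) w) (\<lambda>x. N (x,True) w) (max n0 n1)))"
        using n0 by simp
      moreover have "Delta d (\<lambda>x. N (x,False) w) (\<lambda>x. N (x,True) w) \<zeta>
           = DL d \<zeta> (labs d (\<lambda>x. N (x,False) w) (\<lambda>x. N (x,True) w) (max n0 n1))"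
        using n1[rule_format, of "max n0 n1"] by simp
      ultimately show "thin d L (Delta d (\<lambda>x. N (x,False) w) (\<lambda>x. N (x,True) w) \<zeta>)" by simp
    qed
  qed
  define Q where "Q = (\<lambda>w. \<exists>n0::nat. \<forall>n. n0 \<le> n \<longrightarrow> thin d L (DL d \<zeta> (labs d (\<lambda>x. N (x,False) w) (\<lambda>x. N (x,True) w) n)))"
  have p: "Measurable.pred M Q"
    unfolding Q_def
    apply (rule pred_intros_countable(2))
    apply (rule pred_intros_countable(1))
    apply (rule pred_intros_imp')
    apply (rule pred_thin_n[OF mm])
    done
  have st: "{w \<in> space M. Q w} \<in> sets M" by (rule predE[OF p])
  have "{w \<in> space M. thin d L (Delta d (\<lambda>x. N (x,False) w) (\<lambda>x. N (x,True) w) \<zeta>)} = {w \<in> space M. Q w}"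
  proof (rule Collect_cong)
    fix w show "(w \<in> space M \<and> thin d L (Delta d (\<lambda>x. N (x,False) w) (\<lambda>x. N (x,True) w) \<zeta>)) =
      (w \<in> space M \<and> Q w)"
    proof (cases "w \<in> space M")
      case True show ?thesis using eq[OF True] unfolding Q_def by simp
    next
      case False thus ?thesis by simp
    qed
  qed
  thus ?thesis using st by (simp only:)
qed

theorem lemma4p2:
  fixes d :: nat and lam :: real and \<zeta>' \<zeta>'' :: config
  assumes "d \<ge> 2" and "lam > 0"
    and le: "\<forall>x\<in>cube d. \<zeta>' x \<longrightarrow> \<zeta>'' x"
  shows "(\<forall>dn up. Delta d dn up \<zeta>'' \<subseteq> Delta d dn up \<zeta>')
    \<and> (\<forall>(M :: 'w measure) N L \<delta>.
          mark_model d lam M N \<longrightarrow> L > 0 \<longrightarrow> \<delta> > 0 \<longrightarrow>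
          good d M N L \<delta> \<zeta>' \<longrightarrow> good d M N L \<delta> \<zeta>'')"
proof (intro conjI allI impI)
  fix dn up show "Delta d dn up \<zeta>'' \<subseteq> Delta d dn up \<zeta>'" using Delta_mono[OF le] .
next
  fix M :: "'w measure" and N L \<delta>
  assume mm: "mark_model d lam M N" and g: "good d M N L \<delta> \<zeta>'"
  interpret prob_space M using mm_facts(1)[OF mm] .
  have sub: "{w \<in> space M. thin d L (Delta d (\<lambda>x. N (x,False) w) (\<lambda>x. N (x,True) w) \<zeta>')}
     \<subseteq> {w \<in> space M. thin d L (Delta d (\<lambda>x. N (x,False) w) (\<lambda>x. N (x,True) w) \<zeta>'')}"
    using thin_anti[OF Delta_mono[OF le]] by blast
  have "measure M {w \<in> space M. thin d L (Delta d (\<lambda>x. N (x,False) w) (\<lambda>x. N (x,True) w) \<zeta>')}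
     \<le> measure M {w \<in> space M. thin d L (Delta d (\<lambda>x. N (x,False) w) (\<lambda>x. N (x,True) w) \<zeta>'')}"
    by (rule finite_measure_mono[OF sub E_meas[OF mm]])
  thus "good d M N L \<delta> \<zeta>''" using g unfolding good_def by linarith
qed

end
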